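(* For every $\varepsilon>0$ and every deterministic strategy $A$ for the Canadian Traveller Problem, there exist a unit-weighted outerplanar graph $G$, vertices $s,t$ of $G$, and a set of edges $E_*$ such that $(G,E_* )$ is a road map and the competitive ratio of $A$ on $(G,E_* )$ is greater than $9-\varepsilon$. In other words, no deterministic strategy achieves competitive ratio $9-\varepsilon$ on all road maps $(G,E_* )$ with $G$ a unit-weighted outerplanar graph (with no restriction on the number $k$ of blocked edges).
   Context: The $k$-Canadian Traveller Problem ($k$-CTP): we are given an undirected connected graph $G=(V,E,\omega)$ with weights $\omega:E\to\mathbb{Q}^+$, a source $s\in V$ and a target $t\in V$, and a hidden set $E_*\subsetneq E$ of blocked edges with $|E_*|\le k$. The pair $(G,E_* )$ is a road map if $s$ and $t$ are connected in $G\setminus E_*$; only road maps are considered. A traveller starts at $s$ and must reach $t$. Initially $E_*$ is unknown; the traveller learns whether an edge is blocked exactly when he visits one of its endpoints. A (deterministic) strategy is an online algorithm which, given $G$, $\omega$, $s$, $t$, $k$, the sequence of vertices visited so far and the set of blocked edges revealed so far, chooses the next vertex, a neighbour of the current vertex through an edge not known to be blocked. The cost of the resulting $(s,t)$-walk is the sum of the weights of the traversed edges (with multiplicity). The competitive ratio of $A$ on $(G,E_* )$ is this cost divided by $d_{E_*}(s,t)$, the length of a shortest $(s,t)$-path in $G\setminus E_*$. A graph is unit-weighted if every edge has weight $1$, and outerplanar if it admits a planar embedding with all vertices on the outer face. *)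

theory Defs
  imports "HOL-Analysis.Analysis"
begin

definition wf_graph :: "nat set \<Rightarrow> nat set set \<Rightarrow> bool" where
  "wf_graph V E \<longleftrightarrow> finite V \<and> (\<forall>e\<in>E. \<exists>u v. e = {u, v} \<and> u \<in> V \<and> v \<in> V \<and> u \<noteq> v)"

definition is_walk :: "nat set set \<Rightarrow> nat list \<Rightarrow> bool" where
  "is_walk F p \<longleftrightarrow> p \<noteq> [] \<and> (\<forall>i. Suc i < length p \<longrightarrow> {p ! i, p ! Suc i} \<in> F)"

definition walk_cost :: "(nat set \<Rightarrow> rat) \<Rightarrow> nat list \<Rightarrow> rat" where
  "walk_cost w p = (\<Sum>i < length p - 1. w {p ! i, p ! Suc i})"

definition connected_in :: "nat set set \<Rightarrow> nat \<Rightarrow> nat \<Rightarrow> bool" where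
  "connected_in F u v \<longleftrightarrow> (\<exists>p. is_walk F p \<and> hd p = u \<and> last p = v)"

definition connected_graph :: "nat set \<Rightarrow> nat set set \<Rightarrow> bool" where
  "connected_graph V E \<longleftrightarrow> (\<forall>u\<in>V. \<forall>v\<in>V. connected_in E u v)"

definition blocked_dist :: "nat set set \<Rightarrow> (nat set \<Rightarrow> rat) \<Rightarrow> nat set set \<Rightarrow> nat \<Rightarrow> nat \<Rightarrow> real" where
  "blocked_dist E w Es s t =
     Inf {real_of_rat (walk_cost w p) | p. is_walk (E - Es) p \<and> hd p = s \<and> last p = t}"

definition road_map :: "nat set \<Rightarrow> nat set set \<Rightarrow> nat \<Rightarrow> nat \<Rightarrow> nat \<Rightarrow> nat set set \<Rightarrow> bool" where
  "road_map V E s t k Es \<longleftrightarrow> wf_graph V E \<and> connected_graph V E \<and> s \<in> V \<and> t \<in> V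
     \<and> Es \<subset> E \<and> card Es \<le> k \<and> connected_in (E - Es) s t"

text \<open>A deterministic strategy: given V, E, weights, s, t, k, the sequence of visited
  vertices and the set of revealed blocked edges, it returns the next vertex.\<close>
type_synonym strategy =
  "nat set \<Rightarrow> nat set set \<Rightarrow> (nat set \<Rightarrow> rat) \<Rightarrow> nat \<Rightarrow> nat \<Rightarrow> nat \<Rightarrow> nat list \<Rightarrow> nat set set \<Rightarrow> nat"

definition revealed :: "nat set set \<Rightarrow> nat list \<Rightarrow> nat set set" where
  "revealed Es vs = {e \<in> Es. \<exists>v\<in>set vs. v \<in> e}"

fun run :: "strategy \<Rightarrow> nat set \<Rightarrow> nat set set \<Rightarrow> (nat set \<Rightarrow> rat) \<Rightarrow> nat \<Rightarrow> nat \<Rightarrow> nat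
             \<Rightarrow> nat set set \<Rightarrow> nat \<Rightarrow> nat list" where
  "run A V E w s t k Es 0 = [s]"
| "run A V E w s t k Es (Suc n) =
     (let vs = run A V E w s t k Es n in
      if last vs = t then vs else vs @ [A V E w s t k vs (revealed Es vs)])"

definition valid_strategy :: "strategy \<Rightarrow> bool" where
  "valid_strategy A \<longleftrightarrow>
    (\<forall>V E w s t k Es n. road_map V E s t k Es \<and> (\<forall>e\<in>E. w e > 0) \<longrightarrow>
       (let vs = run A V E w s t k Es n in
        last vs \<noteq> t \<longrightarrow>
          {last vs, A V E w s t k vs (revealed Es vs)} \<in> E - revealed Es vs))"

text \<open>Outerplanarity: there is a planar drawing in the plane (identified with complex)
  with vertices as distinct points, edges as arcs meeting only at common endpoints,
  and every vertex lying on the boundary of the outer (unbounded) face.\<close>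
definition outerplanar :: "nat set \<Rightarrow> nat set set \<Rightarrow> bool" where
  "outerplanar V E \<longleftrightarrow>
    (\<exists>(f :: nat \<Rightarrow> complex) (\<gamma> :: nat set \<Rightarrow> real \<Rightarrow> complex).
       inj_on f V
     \<and> (\<forall>e\<in>E. arc (\<gamma> e) \<and> {pathstart (\<gamma> e), pathfinish (\<gamma> e)} = f ` e
              \<and> path_image (\<gamma> e) \<inter> f ` V = f ` e)
     \<and> (\<forall>e\<in>E. \<forall>e'\<in>E. e \<noteq> e' \<longrightarrow> path_image (\<gamma> e) \<inter> path_image (\<gamma> e') \<subseteq> f ` (e \<inter> e'))
     \<and> (let D = f ` V \<union> (\<Union>e\<in>E. path_image (\<gamma> e)) in
        \<exists>C \<in> components (- D). \<not> bounded C \<and> f ` V \<subseteq> closure C))"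

end

theory Submission
  imports Defs
begin


definition Tf :: "(nat \<Rightarrow> int) \<Rightarrow> int \<Rightarrow> nat" where "Tf W j = (LEAST n. W n = j)"

definition good :: "nat \<Rightarrow> real \<Rightarrow> (nat \<Rightarrow> int) \<Rightarrow> bool" where
"good M C W \<longleftrightarrow> W 0 = 0 \<and>
   (\<forall>n. (\<exists>j. 1 \<le> \<bar>j\<bar> \<and> \<bar>j\<bar> \<le> int M \<and> j \<notin> W ` {..n}) \<longrightarrow> \<bar>W (Suc n) - W n\<bar> = 1) \<and>
   (\<forall>j. 1 \<le> \<bar>j\<bar> \<and> \<bar>j\<bar> \<le> int M \<longrightarrow> (\<exists>n. W n = j \<and> real n + 1 \<le> C * (real_of_int \<bar>j\<bar> + 1)))"

lemma good_neg: "good M C W \<Longrightarrow> good M C (\<lambda>n. - W n)"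
  unfolding good_def
proof (intro conjI allI impI)
  assume g: "W 0 = 0 \<and>
   (\<forall>n. (\<exists>j. 1 \<le> \<bar>j\<bar> \<and> \<bar>j\<bar> \<le> int M \<and> j \<notin> W ` {..n}) \<longrightarrow> \<bar>W (Suc n) - W n\<bar> = 1) \<and>
   (\<forall>j. 1 \<le> \<bar>j\<bar> \<and> \<bar>j\<bar> \<le> int M \<longrightarrow> (\<exists>n. W n = j \<and> real n + 1 \<le> C * (real_of_int \<bar>j\<bar> + 1)))"
  then show "- W 0 = 0" by simp
  fix n assume "\<exists>j. 1 \<le> \<bar>j\<bar> \<and> \<bar>j\<bar> \<le> int M \<and> j \<notin> (\<lambda>n. - W n) ` {..n}"
  then obtain j where j: "1 \<le> \<bar>j\<bar>" "\<bar>j\<bar> \<le> int M" "j \<notin> (\<lambda>n. - W n) ` {..n}" by blast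
  have "-j \<notin> W ` {..n}" using j(3) by force
  then have "\<bar>W (Suc n) - W n\<bar> = 1" using g j(1,2) by (metis abs_minus_cancel)
  then show "\<bar>- W (Suc n) - - W n\<bar> = 1" by simp
next
  fix j :: int
  assume g: "W 0 = 0 \<and>
   (\<forall>n. (\<exists>j. 1 \<le> \<bar>j\<bar> \<and> \<bar>j\<bar> \<le> int M \<and> j \<notin> W ` {..n}) \<longrightarrow> \<bar>W (Suc n) - W n\<bar> = 1) \<and>
   (\<forall>j. 1 \<le> \<bar>j\<bar> \<and> \<bar>j\<bar> \<le> int M \<longrightarrow> (\<exists>n. W n = j \<and> real n + 1 \<le> C * (real_of_int \<bar>j\<bar> + 1)))"
    and j: "1 \<le> \<bar>j\<bar> \<and> \<bar>j\<bar> \<le> int M"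
  then obtain n where "W n = -j" "real n + 1 \<le> C * (real_of_int \<bar>-j\<bar> + 1)"
    by (metis abs_minus_cancel)
  then show "\<exists>n. - W n = j \<and> real n + 1 \<le> C * (real_of_int \<bar>j\<bar> + 1)"
    by (intro exI[of _ n]) auto
qed

lemma T_props:
  assumes "good M C W" "1 \<le> \<bar>j\<bar>" "\<bar>j\<bar> \<le> int M"
  shows "W (Tf W j) = j" "real (Tf W j) + 1 \<le> C * (real_of_int \<bar>j\<bar> + 1)"
proof -
  obtain n where n: "W n = j" "real n + 1 \<le> C * (real_of_int \<bar>j\<bar> + 1)"
    using assms unfolding good_def by blast
  show "W (Tf W j) = j" unfolding Tf_def by (rule LeastI[of _ n]) (use n in auto)
  have "Tf W j \<le> n" unfolding Tf_def by (rule Least_le) (use n in auto)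
  then show "real (Tf W j) + 1 \<le> C * (real_of_int \<bar>j\<bar> + 1)" using n by linarith
qed

lemma T_min: "i < Tf W j \<Longrightarrow> W i \<noteq> j"
  unfolding Tf_def by (rule not_less_Least)

lemma Tf_le: "W i = j \<Longrightarrow> Tf W j \<le> i"
  unfolding Tf_def by (rule Least_le)

lemma step_before:
  assumes "good M C W" "1 \<le> \<bar>j\<bar>" "\<bar>j\<bar> \<le> int M" "i < Tf W j"
  shows "\<bar>W (Suc i) - W i\<bar> = 1"
proof -
  have "j \<notin> W ` {..i}"
  proof
    assume "j \<in> W ` {..i}"
    then obtain i' where "i' \<le> i" "W i' = j" by auto
    then show False using T_min[of i' W j] assms(4) by simp
  qed
  then show ?thesis using assms(1-3) unfolding good_def by blast
qed

lemma walk_dist: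
  assumes "good M C W" "1 \<le> \<bar>j\<bar>" "\<bar>j\<bar> \<le> int M" "m \<le> n" "n \<le> Tf W j"
  shows "\<bar>W n - W m\<bar> \<le> int (n - m)"
proof -
  have "\<forall>d. m + d \<le> Tf W j \<longrightarrow> \<bar>W (m + d) - W m\<bar> \<le> int d"
  proof
    fix d show "m + d \<le> Tf W j \<longrightarrow> \<bar>W (m + d) - W m\<bar> \<le> int d"
    proof (induction d)
      case 0 then show ?case by simp
    next
      case (Suc d)
      show ?case
      proof
        assume h: "m + Suc d \<le> Tf W j"
        then have "\<bar>W (Suc (m + d)) - W (m + d)\<bar> = 1"
          using step_before[OF assms(1-3)] by simp
        then show "\<bar>W (m + Suc d) - W m\<bar> \<le> int (Suc d)" using Suc h by simp
      qed
    qed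
  qed
  then show ?thesis using assms(4,5)
    by (metis le_add_diff_inverse)
qed

lemma ivt: "(\<forall>i<n. \<bar>W (Suc i) - W i\<bar> \<le> 1) \<Longrightarrow> W 0 \<le> a \<Longrightarrow> a \<le> W n \<Longrightarrow> \<exists>i\<le>n. W i = (a::int)"
proof (induction n)
  case 0 then show ?case by auto
next
  case (Suc n)
  show ?case
  proof (cases "a \<le> W n")
    case True then show ?thesis using Suc by (metis le_SucI less_SucI)
  next
    case False
    have "\<bar>W (Suc n) - W n\<bar> \<le> 1" using Suc by auto
    then have "W (Suc n) = a" using False Suc by linarith
    then show ?thesis by blast
  qed
qed

lemma T_mono:
  assumes "good M C W" "1 \<le> a" "a \<le> b" "b \<le> int M"
  shows "Tf W a \<le> Tf W b"
proof -
  have "\<forall>i<Tf W b. \<bar>W (Suc i) - W i\<bar> \<le> 1"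
    using step_before[OF assms(1), of b] assms by fastforce
  moreover have "W 0 \<le> a" using assms unfolding good_def by simp
  moreover have "a \<le> W (Tf W b)" using T_props(1)[OF assms(1), of b] assms by simp
  ultimately obtain i where "i \<le> Tf W b" "W i = a" using ivt by blast
  then show ?thesis using Tf_le by (metis order_trans)
qed

lemma Tf_neg: "Tf (\<lambda>n. - W n) j = Tf W (-j)"
  unfolding Tf_def by (metis minus_equation_iff)

definition ev :: "nat \<Rightarrow> (nat \<Rightarrow> int) \<Rightarrow> nat \<Rightarrow> nat \<Rightarrow> nat \<Rightarrow> bool" where
"ev M W d e t \<longleftrightarrow> 1 \<le> d \<and> d \<le> M \<and> e \<le> M \<and> t = Tf W (int d) \<and>
   (e + 1 \<le> M \<longrightarrow> t < Tf W (- int (e + 1)))"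

lemma trans_ev:
  assumes g: "good M C W" and ev: "ev M W d e t" and e: "e + 1 \<le> M"
  shows "\<exists>e' t'. ev M (\<lambda>n. - W n) (e+1) e' t' \<and> d \<le> e' \<and> t + 2*e' + e + 1 \<le> t' + d"
proof -
  define t' where "t' = Tf W (- int (e+1))"
  have tt': "t < t'" using ev e unfolding ev_def t'_def by auto
  define A where "A = {a. d \<le> a \<and> a \<le> M \<and> Tf W (int a) < t'}"
  have dA: "d \<in> A" using ev tt' unfolding A_def ev_def by auto
  have fA: "finite A" unfolding A_def by (rule finite_subset[of _ "{..M}"]) auto
  define e' where "e' = Max A"
  have e'A: "e' \<in> A" using dA fA e'_def by (metis Max_in empty_iff)
  have de': "d \<le> e'" using dA fA e'_def by simp
  have e'M: "e' \<le> M" "Tf W (int e') < t'" using e'A unfolding A_def by auto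
  have W1: "W t' = - int (e+1)" unfolding t'_def using T_props(1)[OF g, of "- int (e+1)"] e by simp
  have next_ok: "t' < Tf W (int (e'+1))" if h: "e' + 1 \<le> M"
  proof -
    have W2: "W (Tf W (int (e'+1))) = int (e'+1)" using T_props(1)[OF g, of "int (e'+1)"] h by simp
    have "\<not> Tf W (int (e'+1)) < t'"
    proof
      assume "Tf W (int (e'+1)) < t'"
      then have "e' + 1 \<in> A" using de' h unfolding A_def by auto
      then have "e' + 1 \<le> e'" using fA e'_def by simp
      then show False by simp
    qed
    moreover have "Tf W (int (e'+1)) \<noteq> t'" using W1 W2 by auto
    ultimately show ?thesis by simp
  qed
  have evn: "ev M (\<lambda>n. - W n) (e+1) e' t'"
    unfolding ev_def Tf_neg using e e'M next_ok unfolding t'_def by (auto simp: add.commute)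
  define u where "u = Tf W (int e')"
  have Wu: "W u = int e'" unfolding u_def using T_props(1)[OF g, of "int e'"] e'M de' ev
    unfolding ev_def by simp
  have tu: "t \<le> u" unfolding u_def using ev T_mono[OF g, of "int d" "int e'"] de' e'M
    unfolding ev_def by simp
  have ut': "u < t'" using e'M u_def by simp
  have d1: "\<bar>W t' - W u\<bar> \<le> int (t' - u)"
    by (rule walk_dist[OF g, of "- int (e+1)"]) (use e ut' t'_def in auto)
  have d2: "\<bar>W u - W t\<bar> \<le> int (u - t)"
    by (rule walk_dist[OF g, of "int e'"]) (use e'M de' ev tu u_def in \<open>auto simp: ev_def\<close>)
  have Wt: "W t = int d" using ev T_props(1)[OF g, of "int d"] unfolding ev_def by auto
  have "t + 2*e' + e + 1 \<le> t' + d" using d1 d2 W1 Wu Wt tu ut' by linarith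
  then show ?thesis using evn de' by blast
qed

definition st :: "nat \<Rightarrow> real \<Rightarrow> (nat \<Rightarrow> int) \<Rightarrow> nat \<Rightarrow> nat \<Rightarrow> nat \<Rightarrow> real \<Rightarrow> real \<Rightarrow> bool" where
"st M C W d e t S Sp \<longleftrightarrow> good M C W \<and> ev M W d e t \<and> 2*S + real d \<le> real t \<and> S - Sp = real e \<and> 0 \<le> Sp \<and> real d \<le> Sp + 1"

lemma st_trans:
  assumes "st M C W d e t S Sp" "e + 1 \<le> M"
  shows "\<exists>e' t'. st M C (\<lambda>n. - W n) (e+1) e' t' (S + real e') S \<and> 1 \<le> e' \<and> d \<le> e'"
proof -
  have g: "good M C W" and ev: "ev M W d e t" using assms unfolding st_def by auto
  obtain e' t' where h: "ev M (\<lambda>n. - W n) (e+1) e' t'" "d \<le> e'" "t + 2*e' + e + 1 \<le> t' + d"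
    using trans_ev[OF g ev assms(2)] by blast
  have d1: "1 \<le> d" using ev unfolding ev_def by simp
  have r: "real t + 2*real e' + real e + 1 \<le> real t' + real d" using h(3) by linarith
  have "st M C (\<lambda>n. - W n) (e+1) e' t' (S + real e') S"
    unfolding st_def using good_neg[OF g] h(1) assms(1) r unfolding st_def by auto
  then show ?thesis using h(2) d1 by auto
qed

lemma st_bound:
  assumes "st M (9 - \<epsilon>) W d e t S Sp"
  shows "S \<le> (4 - \<epsilon>/2) * (real d + 1)"
proof -
  have g: "good M (9-\<epsilon>) W" and ev: "ev M W d e t" using assms unfolding st_def by auto
  have "real t + 1 \<le> (9 - \<epsilon>) * (real d + 1)"
    using T_props(2)[OF g, of "int d"] ev unfolding ev_def by auto
  moreover have "2*S + real d \<le> real t" using assms unfolding st_def by simp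
  ultimately have "2*S \<le> (9-\<epsilon>)*(real d+1) - (real d + 1)" by linarith
  moreover have "(9-\<epsilon>)*(real d+1) - (real d+1) = 2*((4-\<epsilon>/2)*(real d+1))" by (simp add: algebra_simps)
  ultimately show ?thesis by linarith
qed

lemma growth:
  assumes eps: "0 < \<epsilon>" "\<epsilon> \<le> 1" and "0 \<le> S1"
    and b: "S1 + real e2 \<le> (4 - \<epsilon>/2) * (real (e1+1) + 1)"
  shows "e2 + 2 \<le> 5 * (e1 + 2)"
proof -
  have "(4 - \<epsilon>/2) * (real (e1+1) + 1) \<le> 4 * (real (e1+1) + 1)"
    using eps by (intro mult_right_mono) auto
  moreover have "4 * (real (e1+1) + 1) = 4 * real e1 + 8" by simp
  ultimately have "S1 + real e2 \<le> 4 * real e1 + 8" using b by linarith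
  then have "real e2 \<le> real (4 * e1 + 8)" using assms(3) by simp
  then have "e2 \<le> 4 * e1 + 8" by (simp only: of_nat_le_iff)
  then show ?thesis by simp
qed

lemma warm:
  assumes eps: "0 < \<epsilon>" "\<epsilon> \<le> 1"
  shows "st M (9-\<epsilon>) W d e t S Sp \<Longrightarrow> (e+2)*5^(K+R) \<le> M+1 \<Longrightarrow>
    (\<exists>W' d' e' t' S' Sp'. st M (9-\<epsilon>) W' d' e' t' S' Sp' \<and> S + real K \<le> S' \<and>
       (1 \<le> K \<longrightarrow> S + real K - 1 \<le> Sp' \<and> Sp' < S') \<and> (e'+2)*5^R \<le> M+1)"
proof (induction K arbitrary: R)
  case 0 then show ?case by (intro exI[of _ W] exI[of _ d] exI[of _ e] exI[of _ t] exI[of _ S] exI[of _ Sp]) auto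
next
  case (Suc K)
  have "(e+2)*5^(K + Suc R) \<le> M+1" using Suc.prems(2) by simp
  then obtain W1 d1 e1 t1 S1 Sp1 where s1: "st M (9-\<epsilon>) W1 d1 e1 t1 S1 Sp1" "S + real K \<le> S1"
     "(e1+2)*5^(Suc R) \<le> M+1"
    using Suc.IH[OF Suc.prems(1)] by blast
  have "(e1+2)*5 \<le> (e1+2)*5^(Suc R)" using one_le_power[of "5::nat" R] by (intro mult_left_mono) auto
  then have "(e1+2)*5 \<le> M+1" using s1(3) by (rule order_trans)
  then have e1M: "e1 + 1 \<le> M" by (simp add: algebra_simps)
  obtain e2 t2 where s2: "st M (9-\<epsilon>) (\<lambda>n. - W1 n) (e1+1) e2 t2 (S1 + real e2) S1" "1 \<le> e2"
    using st_trans[OF s1(1) e1M] by blast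
  have b: "S1 + real e2 \<le> (4 - \<epsilon>/2) * (real (e1+1) + 1)" by (rule st_bound[OF s2(1)])
  have "0 \<le> S1" using s2(1) unfolding st_def by simp
  then have "e2 + 2 \<le> 5 * (e1 + 2)" using growth[OF eps _ b] by simp
  then have "(e2+2)*5^R \<le> (5*(e1+2))*5^R" by (rule mult_right_mono) simp
  also have "\<dots> = (e1+2)*5^(Suc R)" by (simp add: algebra_simps)
  finally have bud: "(e2+2)*5^R \<le> M+1" using s1(3) by linarith
  have "S + real (Suc K) \<le> S1 + real e2" using s1(2) s2(2) by simp
  moreover have "S + real (Suc K) - 1 \<le> S1" using s1(2) by simp
  moreover have "S1 < S1 + real e2" using s2(2) by simp
  ultimately show ?case using s2(1) bud by blast
qed

lemma ratio:
  assumes eps: "0 < \<epsilon>" "\<epsilon> \<le> 1"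
  shows "st M (9-\<epsilon>) W d e t S Sp \<Longrightarrow> 128/\<epsilon> + 2 \<le> Sp \<Longrightarrow> Sp < S \<Longrightarrow>
     S \<le> (1 + \<epsilon>/16 * real K) * Sp \<Longrightarrow> (e+2)*5^K \<le> M+1 \<Longrightarrow> False"
proof (induction K arbitrary: W d e t S Sp)
  case 0 then show ?case by simp
next
  case (Suc K)
  have "(e+2)*5 \<le> (e+2)*5^(Suc K)" using one_le_power[of "5::nat" K] by (intro mult_left_mono) auto
  then have "(e+2)*5 \<le> M+1" using Suc.prems(5) by (rule order_trans)
  then have eM: "e + 1 \<le> M" by (simp add: algebra_simps)
  obtain e' t' where s2: "st M (9-\<epsilon>) (\<lambda>n. - W n) (e+1) e' t' (S + real e') S" "1 \<le> e'"
    using st_trans[OF Suc.prems(1) eM] by blast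
  have b: "S + real e' \<le> (4 - \<epsilon>/2) * (real (e+1) + 1)" by (rule st_bound[OF s2(1)])
  have eS: "real e = S - Sp" using Suc.prems(1) unfolding st_def by simp
  define c where "c = 4 - \<epsilon>/2"
  define \<eta> where "\<eta> = \<epsilon>/8"
  define \<rho> where "\<rho> = 1 + \<epsilon>/16 * real (Suc K)"
  have b2: "S + real e' \<le> c * (S - Sp + 2)" using b eS unfolding c_def by (simp add: ac_simps)
  have Sp0: "0 < Sp" using Suc.prems(2) eps by (smt (verit) divide_pos_pos)
  have cq: "(c + \<eta>)^2 \<le> 4 * c"
  proof -
    have ee: "\<epsilon>*\<epsilon> \<le> \<epsilon>" using eps by (simp add: mult_left_le)
    have "(c + \<eta>)^2 = 16 - 3*\<epsilon> + 9/64*(\<epsilon>*\<epsilon>)" unfolding c_def \<eta>_def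
      by (simp add: power2_eq_square algebra_simps)
    moreover have "4*c = 16 - 2*\<epsilon>" unfolding c_def by simp
    ultimately show ?thesis using ee eps by simp
  qed
  have q: "c*(S-Sp)*Sp \<le> S^2 - \<eta>*S*Sp"
  proof -
    define a where "a = c + \<eta>"
    have id: "c*(S-Sp)*Sp - (S^2 - \<eta>*S*Sp) = -((S - a/2*Sp)^2) + (a^2/4 - c)*Sp^2"
      unfolding a_def by (simp add: power2_eq_square algebra_simps)
    have "(a^2/4 - c)*Sp^2 \<le> 0" using cq unfolding a_def by (intro mult_nonpos_nonneg) auto
    moreover have "0 \<le> (S - a/2*Sp)^2" by simp
    ultimately show ?thesis using id by linarith
  qed
  have r1: "S^2 \<le> \<rho> * S * Sp"
  proof -
    have "S \<le> \<rho> * Sp" using Suc.prems(4) unfolding \<rho>_def by simp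
    then have "S * S \<le> (\<rho> * Sp) * S" using Suc.prems(3) Sp0 by (intro mult_right_mono) auto
    then show ?thesis by (simp add: power2_eq_square algebra_simps)
  qed
  have c0: "0 \<le> c" "c \<le> 4" unfolding c_def using eps by auto
  have Lb: "128/\<epsilon> \<le> Sp" using Suc.prems(2) by simp
  have c2: "2*c \<le> \<eta>/2 * Sp"
  proof -
    have "128 \<le> \<epsilon> * Sp" using Lb eps by (simp add: field_simps)
    then show ?thesis unfolding \<eta>_def using c0 by simp
  qed
  have r2: "2*c*Sp \<le> (\<eta> * S * Sp)/2"
  proof -
    have "2*c \<le> \<eta>/2 * S" using c2 Suc.prems(3) eps unfolding \<eta>_def by (smt (verit) mult_left_mono divide_nonneg_pos)
    then have "2*c*Sp \<le> (\<eta>/2 * S) * Sp" using Sp0 by (intro mult_right_mono) auto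
    then show ?thesis by simp
  qed
  have e1: "c*(S - Sp + 2)*Sp = c*(S-Sp)*Sp + 2*c*Sp" by (simp add: algebra_simps)
  have e2: "(\<rho> - \<eta>/2) * S * Sp = \<rho> * S * Sp - (\<eta> * S * Sp)/2" by (simp add: algebra_simps)
  have "c*(S - Sp + 2)*Sp \<le> (\<rho> - \<eta>/2) * S * Sp"
    unfolding e1 e2 using q r1 r2 by linarith
  then have "c*(S - Sp + 2) \<le> (\<rho> - \<eta>/2) * S" using Sp0 by simp
  moreover have "\<rho> - \<eta>/2 = 1 + \<epsilon>/16 * real K" unfolding \<rho>_def \<eta>_def by (simp add: algebra_simps)
  ultimately have nb: "S + real e' \<le> (1 + \<epsilon>/16 * real K) * S" using b2 by simp
  have "(e'+2)*5^K \<le> M+1"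
  proof -
    have "0 \<le> S" using Sp0 Suc.prems(3) by simp
    then have "e' + 2 \<le> 5 * (e + 2)" using growth[OF eps _ b] by simp
    then have "(e'+2)*5^K \<le> (5*(e+2))*5^K" by (rule mult_right_mono) simp
    also have "\<dots> = (e+2)*5^(Suc K)" by (simp add: algebra_simps)
    finally show ?thesis using Suc.prems(5) by linarith
  qed
  then show False
    using Suc.IH[OF s2(1) _ _ nb] Suc.prems(2,3) s2(2) by simp
qed

theorem cow:
  assumes eps: "0 < \<epsilon>" "\<epsilon> \<le> 1"
    and M: "M = 2 * 5 ^ (nat \<lceil>128/\<epsilon>\<rceil> + 3 + nat \<lceil>112/\<epsilon>\<rceil>)"
  shows "\<not> good M (9 - \<epsilon>) W"
proof
  assume g: "good M (9 - \<epsilon>) W"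
  define K1 where "K1 = nat \<lceil>128/\<epsilon>\<rceil> + 3"
  define K2 where "K2 = nat \<lceil>112/\<epsilon>\<rceil>"
  have M1: "1 \<le> M" using M by simp
  have "(1::int) \<notin> W ` {..0}" using g unfolding good_def by simp
  then have "\<bar>W (Suc 0) - W 0\<bar> = 1" using g M1 unfolding good_def
    by (metis abs_one order.refl of_nat_1 of_nat_le_iff)
  then have W1: "W 1 = 1 \<or> W 1 = -1" using g unfolding good_def by auto
  obtain W0 where g0: "good M (9-\<epsilon>) W0" and W0: "W0 0 = 0" "W0 1 = 1"
  proof (cases "W 1 = 1")
    case True then show ?thesis using that g g unfolding good_def by blast
  next
    case False
    then have "W 1 = -1" using W1 by simp
    then show ?thesis using that[of "\<lambda>n. - W n"] good_neg[OF g] g unfolding good_def by auto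
  qed
  have T1: "Tf W0 1 = 1"
  proof -
    have "Tf W0 1 \<le> 1" using Tf_le[of W0 1 1] W0 by simp
    moreover have "Tf W0 1 \<noteq> 0"
    proof
      assume "Tf W0 1 = 0"
      then have "W0 0 = 1" using T_props(1)[OF g0, of 1] M1 by auto
      then show False using W0 by simp
    qed
    ultimately show ?thesis by simp
  qed
  have Tm1: "1 < Tf W0 (-1)"
  proof -
    have "W0 (Tf W0 (-1)) = -1" using T_props(1)[OF g0, of "-1"] M1 by simp
    then have "Tf W0 (-1) \<noteq> 0" "Tf W0 (-1) \<noteq> 1" using W0 by (metis zero_neq_neg_one, metis one_neq_neg_one)
    then show ?thesis by simp
  qed
  have s0: "st M (9-\<epsilon>) W0 1 0 1 0 0" unfolding st_def ev_def using g0 M1 T1 Tm1 by auto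
  have bud: "(0+2)*5^(K1+K2) \<le> M+1" using M unfolding K1_def K2_def by simp
  obtain W' d' e' t' S' Sp' where s: "st M (9-\<epsilon>) W' d' e' t' S' Sp'" "real K1 \<le> S'"
    "real K1 - 1 \<le> Sp'" "Sp' < S'" "(e'+2)*5^K2 \<le> M+1"
    using warm[OF eps s0 bud] unfolding K1_def by force
  have c1: "128/\<epsilon> \<le> real (nat \<lceil>128/\<epsilon>\<rceil>)" by linarith
  have L: "128/\<epsilon> + 2 \<le> Sp'" using s(3) c1 unfolding K1_def by simp
  have pos: "0 \<le> 128/\<epsilon>" using eps by simp
  have b: "S' \<le> (4 - \<epsilon>/2) * (real d' + 1)" by (rule st_bound[OF s(1)])
  have "real d' \<le> Sp' + 1" using s(1) unfolding st_def by simp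
  moreover have "(4 - \<epsilon>/2) * (real d' + 1) \<le> 4 * (real d' + 1)" using eps by (intro mult_right_mono) auto
  moreover note b
  ultimately have "S' \<le> 4 * (real d' + 1)" by linarith
  moreover have "4 * (real d' + 1) \<le> 4 * (Sp' + 2)" using \<open>real d' \<le> Sp' + 1\<close> by simp
  ultimately have "S' \<le> 4 * (Sp' + 2)" by linarith
  moreover have "2 \<le> Sp'" using L pos by linarith
  ultimately have S8: "S' \<le> 8 * Sp'" by (simp add: algebra_simps)
  have "112/\<epsilon> \<le> real K2" unfolding K2_def by linarith
  then have "7 \<le> \<epsilon>/16 * real K2" using eps by (simp add: field_simps)
  moreover have "0 \<le> Sp'" using L pos by linarith
  ultimately have "8 * Sp' \<le> (1 + \<epsilon>/16 * real K2) * Sp'"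
    by (intro mult_right_mono) auto
  then have "S' \<le> (1 + \<epsilon>/16 * real K2) * Sp'" using S8 by linarith
  then show False using ratio[OF eps s(1) L s(4) _ s(5)] by simp
qed




definition Vg :: "nat \<Rightarrow> nat set" where "Vg N = {0..2*N+1}"
definition paths :: "nat \<Rightarrow> nat set set" where "paths N = {{v, Suc v} | v. 1 \<le> v \<and> v \<le> 2*N}"
definition spokes :: "nat \<Rightarrow> nat set set" where "spokes N = {{v, 0} | v. 1 \<le> v \<and> v \<le> 2*N+1}"
definition Eg :: "nat \<Rightarrow> nat set set" where "Eg N = paths N \<union> spokes N"
definition xj :: "nat \<Rightarrow> int \<Rightarrow> nat" where "xj N j = nat (j + int N + 1)"
definition Esj :: "nat \<Rightarrow> int \<Rightarrow> nat set set" where "Esj N j = spokes N - {{xj N j, 0}}"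

lemma spoke_in: "1 \<le> v \<Longrightarrow> v \<le> 2*N+1 \<Longrightarrow> {v, 0} \<in> spokes N"
  unfolding spokes_def by blast

lemma path_in: "1 \<le> a \<Longrightarrow> 1 \<le> b \<Longrightarrow> a \<le> 2*N+1 \<Longrightarrow> b \<le> 2*N+1 \<Longrightarrow> (b = Suc a \<or> a = Suc b) \<Longrightarrow> {a, b} \<in> paths N"
  unfolding paths_def
  apply (elim disjE)
   apply (rule CollectI, rule exI[of _ a], simp)
  apply (rule CollectI, rule exI[of _ b], auto)
  done

lemma zero_notin_path: "e \<in> paths N \<Longrightarrow> 0 \<notin> e"
  unfolding paths_def by auto

lemma spoke_cases: "{a, 0} \<in> Eg N \<Longrightarrow> a \<noteq> 0 \<Longrightarrow> {a, 0} \<in> spokes N \<and> 1 \<le> a \<and> a \<le> 2*N+1"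
  unfolding Eg_def using zero_notin_path[of "{a,0}" N]
  by (auto simp: spokes_def doubleton_eq_iff)

lemma nonzero_edge: "{a, b} \<in> Eg N \<Longrightarrow> a \<noteq> 0 \<Longrightarrow> b \<noteq> 0 \<Longrightarrow> b = Suc a \<or> a = Suc b"
  unfolding Eg_def paths_def spokes_def by (auto simp: doubleton_eq_iff)

lemma walk2: "is_walk E [a, b] \<longleftrightarrow> {a, b} \<in> E"
  unfolding is_walk_def by (auto simp: less_Suc_eq)

lemma walk3: "is_walk E [a, b, c] \<longleftrightarrow> {a, b} \<in> E \<and> {b, c} \<in> E"
  unfolding is_walk_def by (auto simp: less_Suc_eq)

lemma walk1: "is_walk E [a]"
  unfolding is_walk_def by auto

lemma wf: "wf_graph (Vg N) (Eg N)"
  unfolding wf_graph_def Vg_def Eg_def paths_def spokes_def by fastforce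

lemma conn: "connected_graph (Vg N) (Eg N)"
  unfolding connected_graph_def
proof (intro ballI)
  fix u v assume u: "u \<in> Vg N" and v: "v \<in> Vg N"
  have su: "u \<noteq> 0 \<Longrightarrow> {u, 0} \<in> Eg N" using u spoke_in[of u N] unfolding Vg_def Eg_def by auto
  have sv: "v \<noteq> 0 \<Longrightarrow> {v, 0} \<in> Eg N" using v spoke_in[of v N] unfolding Vg_def Eg_def by auto
  show "connected_in (Eg N) u v"
    unfolding connected_in_def
  proof (cases "u = v")
    case True then show "\<exists>p. is_walk (Eg N) p \<and> hd p = u \<and> last p = v"
      by (intro exI[of _ "[u]"]) (simp add: walk1)
  next
    case False
    show "\<exists>p. is_walk (Eg N) p \<and> hd p = u \<and> last p = v"
    proof (cases "u = 0")
      case True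
      then show ?thesis using sv False by (intro exI[of _ "[u, v]"]) (auto simp: walk2 insert_commute)
    next
      case u0: False
      show ?thesis
      proof (cases "v = 0")
        case True
        then show ?thesis using su u0 by (intro exI[of _ "[u, v]"]) (auto simp: walk2)
      next
        case False
        then show ?thesis using su sv u0 by (intro exI[of _ "[u, 0, v]"]) (auto simp: walk3 insert_commute)
      qed
    qed
  qed
qed

lemma xj_range: "1 \<le> \<bar>j\<bar> \<Longrightarrow> \<bar>j\<bar> \<le> int N \<Longrightarrow> 1 \<le> xj N j \<and> xj N j \<le> 2*N+1 \<and> xj N j \<noteq> N+1"
  unfolding xj_def by auto

lemma Esj_sub: "1 \<le> \<bar>j\<bar> \<Longrightarrow> \<bar>j\<bar> \<le> int N \<Longrightarrow> Esj N j \<subset> Eg N"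
proof -
  assume a: "1 \<le> \<bar>j\<bar>" "\<bar>j\<bar> \<le> int N"
  have "{xj N j, 0} \<in> Eg N" using xj_range[OF a] spoke_in[of "xj N j" N] unfolding Eg_def by auto
  then show ?thesis unfolding Esj_def Eg_def by auto
qed

lemma Esj_card: "card (Esj N j) \<le> 2*N+1"
proof -
  have sp: "spokes N = (\<lambda>v. {v, 0}) ` {1..2*N+1}" unfolding spokes_def by auto
  have "card (spokes N) \<le> 2*N+1" unfolding sp using card_image_le[of "{1..2*N+1}" "\<lambda>v. {v, 0::nat}"] by simp
  moreover have "card (Esj N j) \<le> card (spokes N)" unfolding Esj_def sp by (rule card_mono) auto
  ultimately show ?thesis by simp
qed

definition pw :: "nat \<Rightarrow> int \<Rightarrow> nat list" where
  "pw N j = map (\<lambda>i. nat (int N + 1 + sgn j * int i)) [0..<nat \<bar>j\<bar> + 1] @ [0]"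

lemma pw_walk:
  assumes a: "1 \<le> \<bar>j\<bar>" "\<bar>j\<bar> \<le> int N"
  shows "is_walk (Eg N - Esj N j) (pw N j)" "hd (pw N j) = N+1" "last (pw N j) = 0"
    "length (pw N j) = nat \<bar>j\<bar> + 2"
proof -
  define f where "f = (\<lambda>i::nat. nat (int N + 1 + sgn j * int i))"
  define n where "n = nat \<bar>j\<bar> + 1"
  have p: "pw N j = map f [0..<n] @ [0]" unfolding pw_def f_def n_def by simp
  show "length (pw N j) = nat \<bar>j\<bar> + 2" unfolding p n_def by simp
  show "last (pw N j) = 0" unfolding p by simp
  show "hd (pw N j) = N+1" unfolding p n_def f_def by (simp add: upt_conv_Cons del: upt_Suc)
  have sg: "sgn j = 1 \<or> sgn j = -1" using a by (auto simp: sgn_if)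
  have fr: "1 \<le> f i \<and> f i \<le> 2*N+1" if "i < n" for i
    using that sg a unfolding f_def n_def by auto
  have fl: "f (n - 1) = xj N j" unfolding f_def n_def xj_def using sg a
    by (auto simp: sgn_if)
  have fs: "f (Suc i) = Suc (f i) \<or> f i = Suc (f (Suc i))" if "Suc i < n" for i
    using that sg a unfolding f_def n_def by auto
  show "is_walk (Eg N - Esj N j) (pw N j)"
    unfolding is_walk_def
  proof (intro conjI allI impI)
    show "pw N j \<noteq> []" unfolding p by simp
    fix i assume i: "Suc i < length (pw N j)"
    then have i': "i < n" unfolding p by simp
    show "{pw N j ! i, pw N j ! Suc i} \<in> Eg N - Esj N j"
    proof (cases "Suc i < n")
      case True
      have "pw N j ! i = f i" "pw N j ! Suc i = f (Suc i)" unfolding p using True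
        by (auto simp: nth_append)
      moreover have "{f i, f (Suc i)} \<in> paths N"
        using path_in fr[of i] fr[of "Suc i"] fs[of i] True by simp
      moreover have "{f i, f (Suc i)} \<notin> spokes N"
        using zero_notin_path[of "{f i, f (Suc i)}" N] fr[of i] fr[of "Suc i"] True
        unfolding spokes_def by (auto simp: doubleton_eq_iff)
      ultimately show ?thesis unfolding Eg_def Esj_def by auto
    next
      case False
      then have ii: "i = n - 1" using i' by simp
      have "pw N j ! i = f i" "pw N j ! Suc i = 0" unfolding p using False i'
        by (auto simp: nth_append)
      moreover have "{xj N j, 0} \<in> spokes N" using xj_range[OF a] spoke_in by blast
      ultimately show ?thesis unfolding Eg_def Esj_def using fl ii by auto
    qed
  qed
qed

lemma cost1: "walk_cost (\<lambda>_. 1) p = of_nat (length p - 1)"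
  unfolding walk_cost_def by simp

lemma road: "1 \<le> \<bar>j\<bar> \<Longrightarrow> \<bar>j\<bar> \<le> int N \<Longrightarrow> road_map (Vg N) (Eg N) (N+1) 0 (2*N+1) (Esj N j)"
proof -
  assume a: "1 \<le> \<bar>j\<bar>" "\<bar>j\<bar> \<le> int N"
  have c: "connected_in (Eg N - Esj N j) (N+1) 0"
    unfolding connected_in_def using pw_walk[OF a] by blast
  have v: "N+1 \<in> Vg N" "0 \<in> Vg N" unfolding Vg_def by auto
  show ?thesis unfolding road_map_def
    using wf conn Esj_sub[OF a] Esj_card[of N j] c v by blast
qed

lemma dist_bounds:
  assumes a: "1 \<le> \<bar>j\<bar>" "\<bar>j\<bar> \<le> int N"
  shows "1 \<le> blocked_dist (Eg N) (\<lambda>_. 1) (Esj N j) (N+1) 0"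
        "blocked_dist (Eg N) (\<lambda>_. 1) (Esj N j) (N+1) 0 \<le> real_of_int \<bar>j\<bar> + 1"
proof -
  define X where "X = {real_of_rat (walk_cost (\<lambda>_. 1) p) | p. is_walk (Eg N - Esj N j) p \<and> hd p = N+1 \<and> last p = 0}"
  have bd: "blocked_dist (Eg N) (\<lambda>_. 1) (Esj N j) (N+1) 0 = Inf X" unfolding blocked_dist_def X_def by simp
  have cv: "real_of_rat (walk_cost (\<lambda>_. 1) (pw N j)) = real_of_int \<bar>j\<bar> + 1"
  proof -
    have "walk_cost (\<lambda>_. 1) (pw N j) = of_nat (nat \<bar>j\<bar> + 1)" unfolding cost1 pw_walk(4)[OF a] by simp
    then have "real_of_rat (walk_cost (\<lambda>_. 1) (pw N j)) = real (nat \<bar>j\<bar> + 1)"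
      by (simp only: of_rat_of_nat_eq)
    then show ?thesis using a by simp
  qed
  have mem: "real_of_int \<bar>j\<bar> + 1 \<in> X"
    unfolding X_def using pw_walk[OF a] cv[symmetric] by blast
  have lb: "\<forall>x\<in>X. 1 \<le> x"
  proof
    fix x assume "x \<in> X"
    then obtain p where p: "x = real_of_rat (walk_cost (\<lambda>_. 1) p)" "is_walk (Eg N - Esj N j) p" "hd p = N+1" "last p = 0"
      unfolding X_def by blast
    have "p \<noteq> []" using p(2) unfolding is_walk_def by simp
    then have "length p \<noteq> 1" using p(3,4) by (cases p) auto
    moreover have "length p > 0" using \<open>p \<noteq> []\<close> by simp
    ultimately have "2 \<le> length p" by linarith
    then show "1 \<le> x" unfolding p(1) cost1 by simp
  qed
  show "1 \<le> blocked_dist (Eg N) (\<lambda>_. 1) (Esj N j) (N+1) 0" unfolding bd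
    using mem lb by (intro cInf_greatest) auto
  show "blocked_dist (Eg N) (\<lambda>_. 1) (Esj N j) (N+1) 0 \<le> real_of_int \<bar>j\<bar> + 1" unfolding bd
    using mem lb by (intro cInf_lower) (auto simp: bdd_below_def)
qed




lemma run_Suc_eq: "last (run A V E w s t k Es n) \<noteq> t \<Longrightarrow>
  run A V E w s t k Es (Suc n) = run A V E w s t k Es n @ [A V E w s t k (run A V E w s t k Es n) (revealed Es (run A V E w s t k Es n))]"
  by (simp add: Let_def)

lemma run_Suc_t: "last (run A V E w s t k Es n) = t \<Longrightarrow> run A V E w s t k Es (Suc n) = run A V E w s t k Es n"
  by (simp add: Let_def)

lemma run_ne: "run A V E w s t k Es n \<noteq> []"
  by (induction n) (auto simp: Let_def)

lemma run_len: "last (run A V E w s t k Es n) \<noteq> t \<Longrightarrow> length (run A V E w s t k Es n) = Suc n"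
proof (induction n)
  case 0 then show ?case by simp
next
  case (Suc n)
  have "last (run A V E w s t k Es n) \<noteq> t"
  proof
    assume "last (run A V E w s t k Es n) = t"
    then show False using Suc.prems run_Suc_t by metis
  qed
  then show ?case using Suc.IH run_Suc_eq by (metis length_append_singleton)
qed

lemma run_len_le: "length (run A V E w s t k Es n) \<le> Suc n"
proof (induction n)
  case 0 then show ?case by simp
next
  case (Suc n)
  show ?case
  proof (cases "last (run A V E w s t k Es n) = t")
    case True then show ?thesis using Suc run_Suc_t by (metis le_SucI)
  next
    case False then show ?thesis using run_len[OF False] run_Suc_eq[OF False] by simp
  qed
qed

lemma run_take: "i < length (run A V E w s t k Es n) \<Longrightarrow> take (Suc i) (run A V E w s t k Es n) = run A V E w s t k Es i"
proof (induction n)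
  case 0 then show ?case by simp
next
  case (Suc n)
  show ?case
  proof (cases "last (run A V E w s t k Es n) = t")
    case True then show ?thesis using Suc run_Suc_t by metis
  next
    case False
    note L = run_len[OF False]
    note E = run_Suc_eq[OF False]
    show ?thesis
    proof (cases "i < Suc n")
      case True then show ?thesis using Suc.IH L E by simp
    next
      case F2: False
      then have "i = Suc n" using Suc.prems L E by simp
      then show ?thesis using L E by simp
    qed
  qed
qed

lemma run_nth: "i < length (run A V E w s t k Es n) \<Longrightarrow> run A V E w s t k Es n ! i = last (run A V E w s t k Es i)"
proof -
  assume i: "i < length (run A V E w s t k Es n)"
  let ?l = "take (Suc i) (run A V E w s t k Es n)"
  have len: "length ?l = Suc i" using i by simp
  have "run A V E w s t k Es n ! i = ?l ! i" by simp
  also have "\<dots> = last ?l"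
  proof -
    have ne: "?l \<noteq> []" using len by (metis Zero_not_Suc list.size(3))
    show ?thesis using last_conv_nth[OF ne] len by simp
  qed
  finally show ?thesis using run_take[OF i] by simp
qed

lemma run_set: "v \<in> set (run A V E w s t k Es n) \<Longrightarrow> \<exists>i\<le>n. last (run A V E w s t k Es i) = v"
proof -
  assume "v \<in> set (run A V E w s t k Es n)"
  then obtain i where i: "i < length (run A V E w s t k Es n)" "run A V E w s t k Es n ! i = v"
    by (metis in_set_conv_nth)
  then have "i \<le> n" using run_len_le[of A V E w s t k Es n] by simp
  then show ?thesis using i run_nth by metis
qed

lemma run_set_mono: "set (run A V E w s t k Es n) \<subseteq> set (run A V E w s t k Es (Suc n))"
  by (cases "last (run A V E w s t k Es n) = t") (auto simp: run_Suc_t Let_def)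

lemma run_len_mono: "m \<le> n \<Longrightarrow> length (run A V E w s t k Es m) \<le> length (run A V E w s t k Es n)"
proof (induction n rule: dec_induct)
  case base then show ?case by simp
next
  case (step n)
  have "length (run A V E w s t k Es n) \<le> length (run A V E w s t k Es (Suc n))"
    by (cases "last (run A V E w s t k Es n) = t") (auto simp: run_Suc_t Let_def)
  then show ?case using step by simp
qed




abbreviation w1 :: "nat set \<Rightarrow> rat" where "w1 \<equiv> (\<lambda>_. 1)"
abbreviation RR :: "strategy \<Rightarrow> nat \<Rightarrow> nat set set \<Rightarrow> nat \<Rightarrow> nat list" where
  "RR A N Es n \<equiv> run A (Vg N) (Eg N) w1 (N+1) 0 (2*N+1) Es n"

lemma last_run_in: "last (run A V E w s t k Es n) \<in> set (run A V E w s t k Es n)"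
  by (rule last_in_set[OF run_ne])

lemma revealed_eq: "xj N j \<notin> set L \<Longrightarrow> 0 \<notin> set L \<Longrightarrow> revealed (Esj N j) L = revealed (spokes N) L"
  unfolding revealed_def Esj_def by auto

lemma step_eq:
  assumes "RR A N (Esj N j) n = RR A N (spokes N) n" "xj N j \<notin> set (RR A N (spokes N) n)"
    "0 \<notin> set (RR A N (spokes N) n)"
  shows "RR A N (Esj N j) (Suc n) = RR A N (spokes N) (Suc n)"
  using assms revealed_eq[of N j "RR A N (spokes N) n"] by (simp add: Let_def)

lemma simA:
  assumes a: "1 \<le> \<bar>j\<bar>" "\<bar>j\<bar> \<le> int N"
  shows "(xj N j \<notin> set (RR A N (Esj N j) n) \<and> 0 \<notin> set (RR A N (Esj N j) n)) \<or>
         (xj N j \<notin> set (RR A N (spokes N) n) \<and> 0 \<notin> set (RR A N (spokes N) n)) \<Longrightarrow>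
    RR A N (Esj N j) n = RR A N (spokes N) n \<and> RR A N (Esj N j) (Suc n) = RR A N (spokes N) (Suc n)"
proof (induction n)
  case 0
  have "xj N j \<noteq> N+1" using xj_range[OF a] by simp
  then show ?case using step_eq[of A N j 0] by simp
next
  case (Suc n)
  have "(xj N j \<notin> set (RR A N (Esj N j) n) \<and> 0 \<notin> set (RR A N (Esj N j) n)) \<or>
         (xj N j \<notin> set (RR A N (spokes N) n) \<and> 0 \<notin> set (RR A N (spokes N) n))"
    using Suc.prems run_set_mono by blast
  then have eq: "RR A N (Esj N j) (Suc n) = RR A N (spokes N) (Suc n)" using Suc.IH by blast
  then have "xj N j \<notin> set (RR A N (spokes N) (Suc n)) \<and> 0 \<notin> set (RR A N (spokes N) (Suc n))"
    using Suc.prems by metis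
  then show ?case using eq step_eq[of A N j "Suc n"] by blast
qed

lemma valid_step:
  assumes v: "valid_strategy A" and a: "1 \<le> \<bar>j\<bar>" "\<bar>j\<bar> \<le> int N"
    and l: "last (RR A N (Esj N j) n) \<noteq> 0"
  shows "{last (RR A N (Esj N j) n), last (RR A N (Esj N j) (Suc n))} \<in> Eg N - revealed (Esj N j) (RR A N (Esj N j) n)"
proof -
  have pw: "(\<forall>e\<in>Eg N. w1 e > 0)" by simp
  have "{last (RR A N (Esj N j) n), A (Vg N) (Eg N) w1 (N+1) 0 (2*N+1) (RR A N (Esj N j) n) (revealed (Esj N j) (RR A N (Esj N j) n))} \<in> Eg N - revealed (Esj N j) (RR A N (Esj N j) n)"
    by (rule v[unfolded valid_strategy_def Let_def, rule_format, of "Vg N" "Eg N" "N+1" 0 "2*N+1" "Esj N j" w1 n, OF conjI[OF road[OF a] pw] l])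
  then show ?thesis using run_Suc_eq[of A "Vg N" "Eg N" w1 "N+1" 0 "2*N+1" "Esj N j" n] l by simp
qed

lemma not_to_zero:
  assumes v: "valid_strategy A" and a: "1 \<le> \<bar>j\<bar>" "\<bar>j\<bar> \<le> int N"
    and l: "last (RR A N (Esj N j) n) \<noteq> 0" and x: "last (RR A N (Esj N j) n) \<noteq> xj N j"
  shows "last (RR A N (Esj N j) (Suc n)) \<noteq> 0"
proof
  let ?a = "last (RR A N (Esj N j) n)"
  assume b: "last (RR A N (Esj N j) (Suc n)) = 0"
  have e: "{?a, 0} \<in> Eg N - revealed (Esj N j) (RR A N (Esj N j) n)"
    using valid_step[OF v a l] b by simp
  then have "{?a, 0} \<in> spokes N" using spoke_cases l by blast
  then have "{?a, 0} \<in> Esj N j" using x unfolding Esj_def by (auto simp: doubleton_eq_iff)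
  moreover have "?a \<in> set (RR A N (Esj N j) n)" using run_ne by (metis last_in_set)
  ultimately have "{?a, 0} \<in> revealed (Esj N j) (RR A N (Esj N j) n)" unfolding revealed_def by auto
  then show False using e by simp
qed

lemma noT_R:
  assumes v: "valid_strategy A" and a: "1 \<le> \<bar>j\<bar>" "\<bar>j\<bar> \<le> int N"
  shows "xj N j \<notin> set (RR A N (spokes N) n) \<Longrightarrow> 0 \<notin> set (RR A N (spokes N) n)"
proof (induction n)
  case 0 then show ?case by simp
next
  case (Suc n)
  have x0: "xj N j \<notin> set (RR A N (spokes N) n)" using Suc.prems run_set_mono by blast
  then have z0: "0 \<notin> set (RR A N (spokes N) n)" using Suc.IH by blast
  have eq: "RR A N (Esj N j) n = RR A N (spokes N) n" "RR A N (Esj N j) (Suc n) = RR A N (spokes N) (Suc n)"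
    using simA[OF a] x0 z0 by blast+
  have l: "last (RR A N (Esj N j) n) \<noteq> 0" using z0 eq(1) last_run_in[of A "Vg N" "Eg N" w1 "N+1" 0 "2*N+1" "Esj N j" n] by (metis (no_types))
  have lx: "last (RR A N (Esj N j) n) \<noteq> xj N j" using x0 eq(1) last_run_in[of A "Vg N" "Eg N" w1 "N+1" 0 "2*N+1" "Esj N j" n] by (metis (no_types))
  have "last (RR A N (Esj N j) (Suc n)) \<noteq> 0" by (rule not_to_zero[OF v a l lx])
  moreover have X: "RR A N (Esj N j) (Suc n) = RR A N (Esj N j) n @ [last (RR A N (Esj N j) (Suc n))]"
    using run_Suc_eq[of A "Vg N" "Eg N" w1 "N+1" 0 "2*N+1" "Esj N j" n] l by simp
  have "set (RR A N (Esj N j) (Suc n)) = set (RR A N (Esj N j) n) \<union> {last (RR A N (Esj N j) (Suc n))}"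
    by (subst X) simp
  then have "set (RR A N (spokes N) (Suc n)) = set (RR A N (spokes N) n) \<union> {last (RR A N (Esj N j) (Suc n))}"
    by (simp only: eq)
  then show ?case using z0 \<open>last (RR A N (Esj N j) (Suc n)) \<noteq> 0\<close> by simp
qed

definition Wf :: "strategy \<Rightarrow> nat \<Rightarrow> nat \<Rightarrow> int" where
  "Wf A N n = int (last (RR A N (spokes N) n)) - int (N+1)"

lemma xj_int: "1 \<le> \<bar>j\<bar> \<Longrightarrow> \<bar>j\<bar> \<le> int N \<Longrightarrow> int (xj N j) = j + int N + 1"
  unfolding xj_def by simp

lemma arith_step: "(b::nat) = Suc a \<or> a = Suc b \<Longrightarrow> \<bar>(int b - int c) - (int a - int c)\<bar> = 1"
  by auto

lemma W_step:
  assumes v: "valid_strategy A" and a: "1 \<le> \<bar>j\<bar>" "\<bar>j\<bar> \<le> int N"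
    and nj: "j \<notin> Wf A N ` {..n}"
  shows "\<bar>Wf A N (Suc n) - Wf A N n\<bar> = 1"
proof -
  have x0: "xj N j \<notin> set (RR A N (spokes N) n)"
  proof
    assume "xj N j \<in> set (RR A N (spokes N) n)"
    then obtain i where "i \<le> n" "last (RR A N (spokes N) i) = xj N j"
      using run_set[of "xj N j" A "Vg N" "Eg N" w1 "N+1" 0 "2*N+1" "spokes N" n] by blast
    then have "Wf A N i = j" "i \<le> n" unfolding Wf_def using xj_int[OF a] by (simp_all del: run.simps)
    then show False using nj by auto
  qed
  have z0: "0 \<notin> set (RR A N (spokes N) n)" by (rule noT_R[OF v a x0])
  have eq: "RR A N (Esj N j) n = RR A N (spokes N) n" "RR A N (Esj N j) (Suc n) = RR A N (spokes N) (Suc n)"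
    using simA[OF a] x0 z0 by blast+
  have l: "last (RR A N (Esj N j) n) \<noteq> 0" using z0 eq(1) last_run_in[of A "Vg N" "Eg N" w1 "N+1" 0 "2*N+1" "Esj N j" n] by (metis (no_types))
  have lx: "last (RR A N (Esj N j) n) \<noteq> xj N j" using x0 eq(1) last_run_in[of A "Vg N" "Eg N" w1 "N+1" 0 "2*N+1" "Esj N j" n] by (metis (no_types))
  have b0: "last (RR A N (Esj N j) (Suc n)) \<noteq> 0" by (rule not_to_zero[OF v a l lx])
  have "{last (RR A N (Esj N j) n), last (RR A N (Esj N j) (Suc n))} \<in> Eg N"
    using valid_step[OF v a l] by blast
  then have "last (RR A N (Esj N j) (Suc n)) = Suc (last (RR A N (Esj N j) n)) \<or>
             last (RR A N (Esj N j) n) = Suc (last (RR A N (Esj N j) (Suc n)))"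
    using nonzero_edge l b0 by blast
  then have "last (RR A N (spokes N) (Suc n)) = Suc (last (RR A N (spokes N) n)) \<or>
             last (RR A N (spokes N) n) = Suc (last (RR A N (spokes N) (Suc n)))"
    by (simp only: eq)
  then show ?thesis unfolding Wf_def by (rule arith_step)
qed

lemma W_cover:
  assumes v: "valid_strategy A" and a: "1 \<le> \<bar>j\<bar>" "\<bar>j\<bar> \<le> int N"
    and t: "last (RR A N (Esj N j) n0) = 0"
  shows "\<exists>m. Wf A N m = j \<and> m + 2 \<le> length (RR A N (Esj N j) n0)"
proof -
  let ?P = "\<lambda>i. last (RR A N (Esj N j) i) = xj N j \<or> last (RR A N (Esj N j) i) = 0"
  define m where "m = (LEAST i. ?P i)"
  have Pm: "?P m" unfolding m_def by (rule LeastI[of _ n0]) (use t in simp)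
  have mn: "m \<le> n0" unfolding m_def by (rule Least_le) (use t in simp)
  have notP: "\<not> ?P i" if "i < m" for i using not_less_Least[of i ?P] that unfolding m_def by blast
  have "\<not> ?P 0" using xj_range[OF a] by simp
  then have "m \<noteq> 0" using Pm by metis
  then obtain m' where m': "m = Suc m'" by (metis not0_implies_Suc)
  have xs0: "v \<notin> set (RR A N (Esj N j) m')" if "v = xj N j \<or> v = 0" for v
  proof
    assume "v \<in> set (RR A N (Esj N j) m')"
    then obtain i where "i \<le> m'" "last (RR A N (Esj N j) i) = v"
      using run_set[of v A "Vg N" "Eg N" w1 "N+1" 0 "2*N+1" "Esj N j" m'] by blast
    moreover have "i < m" using \<open>i \<le> m'\<close> m' by simp
    ultimately show False using notP that by blast
  qed
  have xs: "xj N j \<notin> set (RR A N (Esj N j) m')" "0 \<notin> set (RR A N (Esj N j) m')"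
    using xs0 by auto
  have eq: "RR A N (Esj N j) m' = RR A N (spokes N) m'" "RR A N (Esj N j) m = RR A N (spokes N) m"
    using simA[OF a] xs m' by blast+
  have l: "last (RR A N (Esj N j) m') \<noteq> 0" using xs last_run_in[of A "Vg N" "Eg N" w1 "N+1" 0 "2*N+1" "Esj N j" m'] by (metis (no_types))
  have lx: "last (RR A N (Esj N j) m') \<noteq> xj N j" using xs last_run_in[of A "Vg N" "Eg N" w1 "N+1" 0 "2*N+1" "Esj N j" m'] by (metis (no_types))
  have "last (RR A N (Esj N j) m) \<noteq> 0" using not_to_zero[OF v a l lx] m' by simp
  then have lm: "last (RR A N (Esj N j) m) = xj N j" using Pm by simp
  have W: "Wf A N m = j" unfolding Wf_def using eq(2) lm xj_int[OF a] by simp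
  have lm0: "last (RR A N (Esj N j) m) \<noteq> 0" using lm xj_range[OF a] by simp
  have "length (RR A N (Esj N j) m) = Suc m" by (rule run_len[OF lm0])
  then have "length (RR A N (Esj N j) (Suc m)) = Suc (Suc m)"
    using run_Suc_eq[of A "Vg N" "Eg N" w1 "N+1" 0 "2*N+1" "Esj N j" m] lm0 by simp
  moreover have "m \<noteq> n0" using lm0 t by metis
  then have "Suc m \<le> n0" using mn by simp
  ultimately have "m + 2 \<le> length (RR A N (Esj N j) n0)"
    using run_len_mono[of "Suc m" n0 A "Vg N" "Eg N" w1 "N+1" 0 "2*N+1" "Esj N j"] by simp
  then show ?thesis using W by blast
qed




definition fpos :: "nat \<Rightarrow> complex" where "fpos v = (if v = 0 then \<i> else of_nat v)"
definition gam :: "nat set \<Rightarrow> real \<Rightarrow> complex" where "gam e = linepath (fpos (Min e)) (fpos (Max e))"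

lemma edge_form: "e \<in> Eg N \<Longrightarrow> (\<exists>a. e = {a, Suc a} \<and> 1 \<le> a \<and> a \<le> 2*N) \<or> (\<exists>b. e = {0, b} \<and> 1 \<le> b \<and> b \<le> 2*N+1)"
  unfolding Eg_def paths_def spokes_def by (auto simp: insert_commute)

lemma seg_path: "z \<in> closed_segment (of_nat a :: complex) (of_nat (Suc a)) \<Longrightarrow> Im z = 0 \<and> real a \<le> Re z \<and> Re z \<le> real a + 1"
  unfolding in_segment by (auto simp: algebra_simps)

lemma seg_spoke: "z \<in> closed_segment \<i> (of_nat b :: complex) \<Longrightarrow> \<exists>u. 0 \<le> u \<and> u \<le> 1 \<and> Re z = u * real b \<and> Im z = 1 - u"
proof -
  assume "z \<in> closed_segment \<i> (of_nat b :: complex)"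
  then obtain u where u: "0 \<le> u" "u \<le> 1" "z = (1 - u) *\<^sub>R \<i> + u *\<^sub>R (of_nat b :: complex)"
    unfolding in_segment by blast
  show ?thesis by (rule exI[of _ u]) (use u in simp)
qed

lemma fpos_Im: "Im (fpos v) = (if v = 0 then 1 else 0)" "v \<noteq> 0 \<Longrightarrow> Re (fpos v) = real v"
  unfolding fpos_def by auto

lemma fpos_inj: "fpos v = fpos w \<Longrightarrow> v = w"
  unfolding fpos_def by (auto split: if_splits simp: complex_eq_iff)

lemma real_eq_fpos: "z = fpos w \<Longrightarrow> Im z = 0 \<Longrightarrow> w \<noteq> 0 \<and> Re z = real w"
  unfolding fpos_def by (auto split: if_splits)

lemma gam_path: "gam {a, Suc a} = linepath (of_nat a) (of_nat (Suc a))" if "1 \<le> a"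
  unfolding gam_def fpos_def using that by auto

lemma gam_spoke: "gam {0, b} = linepath \<i> (of_nat b)" if "1 \<le> b"
  unfolding gam_def fpos_def using that by auto

lemma pimg_path: "1 \<le> a \<Longrightarrow> path_image (gam {a, Suc a}) = closed_segment (of_nat a) (of_nat (Suc a))"
  by (simp add: gam_path)

lemma pimg_spoke: "1 \<le> b \<Longrightarrow> path_image (gam {0, b}) = closed_segment \<i> (of_nat b)"
  by (simp add: gam_spoke)

lemma fpos_a: "1 \<le> a \<Longrightarrow> fpos a = of_nat a" unfolding fpos_def by simp

lemma edge_props:
  assumes e: "e \<in> Eg N"
  shows "arc (gam e) \<and> {pathstart (gam e), pathfinish (gam e)} = fpos ` e \<and>
         path_image (gam e) \<inter> fpos ` Vg N = fpos ` e"
  using edge_form[OF e]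
proof (elim disjE exE conjE)
  fix a assume ea: "e = {a, Suc a}" "1 \<le> a" "a \<le> 2*N"
  have ar: "arc (gam e)" unfolding ea gam_path[OF ea(2)] by (rule arc_linepath) simp
  have se: "{pathstart (gam e), pathfinish (gam e)} = fpos ` e"
    unfolding ea gam_path[OF ea(2)] using ea(2) by (simp add: fpos_a)
  have "path_image (gam e) \<inter> fpos ` Vg N \<subseteq> fpos ` e"
  proof
    fix z assume z: "z \<in> path_image (gam e) \<inter> fpos ` Vg N"
    then obtain w where w: "w \<in> Vg N" "z = fpos w" by auto
    have s: "Im z = 0 \<and> real a \<le> Re z \<and> Re z \<le> real a + 1"
      using z seg_path unfolding ea pimg_path[OF ea(2)] by blast
    then have "w \<noteq> 0 \<and> Re z = real w" using real_eq_fpos w(2) by blast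
    then have "w = a \<or> w = Suc a" using s by auto
    then show "z \<in> fpos ` e" using w ea by auto
  qed
  moreover have "fpos ` e \<subseteq> path_image (gam e)"
    unfolding ea pimg_path[OF ea(2)] using ea(2) by (auto simp: fpos_a)
  moreover have "fpos ` e \<subseteq> fpos ` Vg N" using ea unfolding Vg_def by auto
  ultimately show ?thesis using ar se by blast
next
  fix b assume eb: "e = {0, b}" "1 \<le> b" "b \<le> 2*N+1"
  have ar: "arc (gam e)" unfolding eb gam_spoke[OF eb(2)] by (rule arc_linepath) (simp add: complex_eq_iff)
  have se: "{pathstart (gam e), pathfinish (gam e)} = fpos ` e"
    unfolding eb gam_spoke[OF eb(2)] using eb(2) by (simp add: fpos_a fpos_def insert_commute)
  have "path_image (gam e) \<inter> fpos ` Vg N \<subseteq> fpos ` e"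
  proof
    fix z assume z: "z \<in> path_image (gam e) \<inter> fpos ` Vg N"
    then obtain w where w: "w \<in> Vg N" "z = fpos w" by auto
    obtain u where u: "0 \<le> u" "u \<le> 1" "Re z = u * real b" "Im z = 1 - u"
      using z seg_spoke unfolding eb pimg_spoke[OF eb(2)] by blast
    show "z \<in> fpos ` e"
    proof (cases "w = 0")
      case True then show ?thesis using w eb by auto
    next
      case False
      then have "Im z = 0" "Re z = real w" using w(2) unfolding fpos_def by auto
      then have "u = 1" using u by simp
      then have "w = b" using u \<open>Re z = real w\<close> by simp
      then show ?thesis using w eb by auto
    qed
  qed
  moreover have "fpos ` e \<subseteq> path_image (gam e)"
    unfolding eb pimg_spoke[OF eb(2)] using eb(2) by (auto simp: fpos_a fpos_def)
  moreover have "fpos ` e \<subseteq> fpos ` Vg N" using eb unfolding Vg_def by auto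
  ultimately show ?thesis using ar se by blast
qed

lemma z_real: "Im z = 0 \<Longrightarrow> Re z = real w \<Longrightarrow> 1 \<le> w \<Longrightarrow> z = fpos w"
  unfolding fpos_def by (auto simp: complex_eq_iff)

lemma cross_ps:
  assumes "1 \<le> a" "1 \<le> b" "z \<in> closed_segment (of_nat a) (of_nat (Suc a))" "z \<in> closed_segment \<i> (of_nat b)"
  shows "z \<in> fpos ` ({a, Suc a} \<inter> {0, b})"
proof -
  have s: "Im z = 0 \<and> real a \<le> Re z \<and> Re z \<le> real a + 1" using seg_path assms(3) by blast
  obtain u where u: "0 \<le> u" "u \<le> 1" "Re z = u * real b" "Im z = 1 - u" using seg_spoke assms(4) by blast
  have "u = 1" using s u by simp
  then have "Re z = real b" using u by simp
  then have "b = a \<or> b = Suc a" using s by auto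
  moreover have "z = fpos b" using z_real s \<open>Re z = real b\<close> assms(2) by blast
  ultimately show ?thesis by auto
qed

lemma disj_edges:
  assumes e: "e \<in> Eg N" and e': "e' \<in> Eg N" and ne: "e \<noteq> e'"
  shows "path_image (gam e) \<inter> path_image (gam e') \<subseteq> fpos ` (e \<inter> e')"
proof
  fix z assume z: "z \<in> path_image (gam e) \<inter> path_image (gam e')"
  show "z \<in> fpos ` (e \<inter> e')"
    using edge_form[OF e]
  proof (elim disjE exE conjE)
    fix a assume ea: "e = {a, Suc a}" "1 \<le> a" "a \<le> 2*N"
    have za: "z \<in> closed_segment (of_nat a) (of_nat (Suc a))" using z unfolding ea pimg_path[OF ea(2)] by blast
    show ?thesis using edge_form[OF e']
    proof (elim disjE exE conjE)
      fix a' assume ea': "e' = {a', Suc a'}" "1 \<le> a'" "a' \<le> 2*N"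
      have za': "z \<in> closed_segment (of_nat a') (of_nat (Suc a'))" using z unfolding ea' pimg_path[OF ea'(2)] by blast
      have s: "Im z = 0 \<and> real a \<le> Re z \<and> Re z \<le> real a + 1" using seg_path za by blast
      have s': "Im z = 0 \<and> real a' \<le> Re z \<and> Re z \<le> real a' + 1" using seg_path za' by blast
      have "a \<noteq> a'" using ne ea ea' by auto
      then show ?thesis
      proof (cases "a < a'")
        case True
        then have "Re z = real (Suc a)" "a' = Suc a" using s s' by auto
        then have "z = fpos (Suc a)" using z_real s by simp
        then show ?thesis using ea ea' \<open>a' = Suc a\<close> by auto
      next
        case False
        then have "a' < a" using \<open>a \<noteq> a'\<close> by simp
        then have "Re z = real (Suc a')" "a = Suc a'" using s s' by auto
        then have "z = fpos (Suc a')" using z_real s by simp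
        then show ?thesis using ea ea' \<open>a = Suc a'\<close> by auto
      qed
    next
      fix b assume eb: "e' = {0, b}" "1 \<le> b" "b \<le> 2*N+1"
      have zb: "z \<in> closed_segment \<i> (of_nat b)" using z unfolding eb pimg_spoke[OF eb(2)] by blast
      show ?thesis using cross_ps[OF ea(2) eb(2) za zb] ea eb by simp
    qed
  next
    fix b assume eb: "e = {0, b}" "1 \<le> b" "b \<le> 2*N+1"
    have zb: "z \<in> closed_segment \<i> (of_nat b)" using z unfolding eb pimg_spoke[OF eb(2)] by blast
    show ?thesis using edge_form[OF e']
    proof (elim disjE exE conjE)
      fix a assume ea: "e' = {a, Suc a}" "1 \<le> a" "a \<le> 2*N"
      have za: "z \<in> closed_segment (of_nat a) (of_nat (Suc a))" using z unfolding ea pimg_path[OF ea(2)] by blast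
      show ?thesis using cross_ps[OF ea(2) eb(2) za zb] ea eb by (simp add: Int_commute)
    next
      fix b' assume eb': "e' = {0, b'}" "1 \<le> b'" "b' \<le> 2*N+1"
      have zb': "z \<in> closed_segment \<i> (of_nat b')" using z unfolding eb' pimg_spoke[OF eb'(2)] by blast
      obtain u where u: "0 \<le> u" "u \<le> 1" "Re z = u * real b" "Im z = 1 - u" using seg_spoke zb by blast
      obtain u' where u': "0 \<le> u'" "u' \<le> 1" "Re z = u' * real b'" "Im z = 1 - u'" using seg_spoke zb' by blast
      have "u = u'" using u u' by simp
      have "b \<noteq> b'" using ne eb eb' by auto
      then have "real b \<noteq> real b'" by simp
      then have "u = 0" using u u' \<open>u = u'\<close> by (metis mult_cancel_left)
      then have "z = \<i>" using u by (simp add: complex_eq_iff)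
      then have "z = fpos 0" unfolding fpos_def by simp
      then show ?thesis using eb eb' by auto
    qed
  qed
qed

definition Hbox :: "nat \<Rightarrow> complex set" where "Hbox N = cbox 0 (Complex (2*real N+2) 1)"

lemma in_Hbox: "z \<in> Hbox N \<longleftrightarrow> 0 \<le> Re z \<and> Re z \<le> 2*real N+2 \<and> 0 \<le> Im z \<and> Im z \<le> 1"
  unfolding Hbox_def cbox_complex_eq by auto

lemma fpos_H: "v \<in> Vg N \<Longrightarrow> fpos v \<in> Hbox N"
  unfolding in_Hbox fpos_def Vg_def by auto

lemma D_sub: "fpos ` Vg N \<union> (\<Union>e\<in>Eg N. path_image (gam e)) \<subseteq> Hbox N"
proof -
  have cv: "convex (Hbox N)" unfolding Hbox_def by simp
  have "path_image (gam e) \<subseteq> Hbox N" if e: "e \<in> Eg N" for e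
  proof -
    have eV: "e \<subseteq> Vg N" using e unfolding Eg_def paths_def spokes_def Vg_def by auto
    have fe: "finite e" "e \<noteq> {}" using e edge_form by fastforce+
    have "Min e \<in> Vg N" "Max e \<in> Vg N" using eV fe Min_in Max_in by blast+
    then show ?thesis unfolding gam_def path_image_linepath
      by (intro closed_segment_subset cv fpos_H)
  qed
  then show ?thesis using fpos_H by blast
qed

lemma outer: "let D = fpos ` Vg N \<union> (\<Union>e\<in>Eg N. path_image (gam e)) in
        \<exists>C \<in> components (- D). \<not> bounded C \<and> fpos ` Vg N \<subseteq> closure C"
  unfolding Let_def
proof -
  let ?D = "fpos ` Vg N \<union> (\<Union>e\<in>Eg N. path_image (gam e))"
  have conn: "connected (- Hbox N)" unfolding Hbox_def
    by (rule connected_complement_bounded_convex) auto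
  have ne: "- Hbox N \<noteq> {}" using in_Hbox[of "Complex (-1) 0" N] by auto
  have sub: "- Hbox N \<subseteq> - ?D" using D_sub by blast
  then have "- ?D \<noteq> {}" using ne by blast
  then obtain C where C: "C \<in> components (- ?D)" "- Hbox N \<subseteq> C"
    using exists_component_superset[OF sub _ conn] by blast
  have nb: "\<not> bounded C"
  proof
    assume "bounded C"
    then have "bounded (- Hbox N)" using C(2) bounded_subset by blast
    moreover have "bounded (Hbox N)" unfolding Hbox_def by simp
    ultimately have "bounded (Hbox N \<union> - Hbox N)" by (metis bounded_Un)
    moreover have "Hbox N \<union> - Hbox N = UNIV" by auto
    ultimately show False using not_bounded_UNIV by metis
  qed
  have "fpos ` Vg N \<subseteq> closure (- Hbox N)"
  proof
    fix x assume "x \<in> fpos ` Vg N"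
    then obtain v where v: "x = fpos v" by auto
    show "x \<in> closure (- Hbox N)" unfolding closure_approachable
    proof (intro allI impI)
      fix \<epsilon> :: real assume ep: "\<epsilon> > 0"
      show "\<exists>y\<in>- Hbox N. dist y x < \<epsilon>"
      proof (cases "v = 0")
        case True
        let ?y = "x + of_real (\<epsilon>/2) * \<i>"
        have "Im ?y = 1 + \<epsilon>/2" using True v unfolding fpos_def by simp
        then have "?y \<in> - Hbox N" using ep in_Hbox by auto
        moreover have "dist ?y x = \<epsilon>/2" using ep by (simp add: dist_norm norm_mult)
        ultimately show ?thesis using ep by (intro bexI[of _ ?y]) auto
      next
        case False
        let ?y = "x - of_real (\<epsilon>/2) * \<i>"
        have "Im ?y = - (\<epsilon>/2)" using False v unfolding fpos_def by simp
        then have "?y \<in> - Hbox N" using ep in_Hbox by auto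
        moreover have "dist ?y x = \<epsilon>/2" using ep by (simp add: dist_norm norm_mult)
        ultimately show ?thesis using ep by (intro bexI[of _ ?y]) auto
      qed
    qed
  qed
  also have "\<dots> \<subseteq> closure C" using C(2) by (rule closure_mono)
  finally show "\<exists>C \<in> components (- ?D). \<not> bounded C \<and> fpos ` Vg N \<subseteq> closure C"
    using C(1) nb by blast
qed

lemma outerplanar_G: "outerplanar (Vg N) (Eg N)"
  unfolding outerplanar_def
proof (intro exI[of _ fpos] exI[of _ gam] conjI)
  show "inj_on fpos (Vg N)" by (meson fpos_inj inj_onI)
  show "\<forall>e\<in>Eg N. arc (gam e) \<and> {pathstart (gam e), pathfinish (gam e)} = fpos ` e \<and>
         path_image (gam e) \<inter> fpos ` Vg N = fpos ` e" using edge_props by blast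
  show "\<forall>e\<in>Eg N. \<forall>e'\<in>Eg N. e \<noteq> e' \<longrightarrow> path_image (gam e) \<inter> path_image (gam e') \<subseteq> fpos ` (e \<inter> e')"
    using disj_edges by blast
  show "let D = fpos ` Vg N \<union> (\<Union>e\<in>Eg N. path_image (gam e)) in
        \<exists>C \<in> components (- D). \<not> bounded C \<and> fpos ` Vg N \<subseteq> closure C" by (rule outer)
qed


theorem theorem2:
  fixes \<epsilon> :: real and A :: strategy
  assumes "\<epsilon> > 0" and "valid_strategy A"
  shows "\<exists>V E s t Es k. outerplanar V E \<and> road_map V E s t k Es \<and>
           (\<forall>n. last (run A V E (\<lambda>_. 1) s t k Es n) = t \<longrightarrow>
              real_of_rat (walk_cost (\<lambda>_. 1) (run A V E (\<lambda>_. 1) s t k Es n))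
                / blocked_dist E (\<lambda>_. 1) Es s t > 9 - \<epsilon>)"
proof -
  define \<epsilon>' where "\<epsilon>' = min \<epsilon> 1"
  have e': "0 < \<epsilon>'" "\<epsilon>' \<le> 1" "\<epsilon>' \<le> \<epsilon>" unfolding \<epsilon>'_def using assms(1) by auto
  define N :: nat where "N = 2 * 5 ^ (nat \<lceil>128/\<epsilon>'\<rceil> + 3 + nat \<lceil>112/\<epsilon>'\<rceil>)"
  have "\<exists>j. 1 \<le> \<bar>j\<bar> \<and> \<bar>j\<bar> \<le> int N \<and> (\<forall>n. last (RR A N (Esj N j) n) = 0 \<longrightarrow>
      real_of_rat (walk_cost w1 (RR A N (Esj N j) n)) / blocked_dist (Eg N) w1 (Esj N j) (N+1) 0 > 9 - \<epsilon>)"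
  proof (rule ccontr)
    assume H: "\<not> (\<exists>j. 1 \<le> \<bar>j\<bar> \<and> \<bar>j\<bar> \<le> int N \<and> (\<forall>n. last (RR A N (Esj N j) n) = 0 \<longrightarrow>
      real_of_rat (walk_cost w1 (RR A N (Esj N j) n)) / blocked_dist (Eg N) w1 (Esj N j) (N+1) 0 > 9 - \<epsilon>))"
    have "good N (9 - \<epsilon>') (Wf A N)"
      unfolding good_def
    proof (intro conjI allI impI)
      show "Wf A N 0 = 0" unfolding Wf_def by simp
    next
      fix n assume "\<exists>j. 1 \<le> \<bar>j\<bar> \<and> \<bar>j\<bar> \<le> int N \<and> j \<notin> Wf A N ` {..n}"
      then obtain j where j: "1 \<le> \<bar>j\<bar>" "\<bar>j\<bar> \<le> int N" "j \<notin> Wf A N ` {..n}" by blast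
      show "\<bar>Wf A N (Suc n) - Wf A N n\<bar> = 1" by (rule W_step[OF assms(2) j])
    next
      fix j :: int assume a: "1 \<le> \<bar>j\<bar> \<and> \<bar>j\<bar> \<le> int N"
      then obtain n0 where t: "last (RR A N (Esj N j) n0) = 0"
        and r: "\<not> (real_of_rat (walk_cost w1 (RR A N (Esj N j) n0)) / blocked_dist (Eg N) w1 (Esj N j) (N+1) 0 > 9 - \<epsilon>)"
        using H by blast
      have a1: "1 \<le> \<bar>j\<bar>" "\<bar>j\<bar> \<le> int N" using a by auto
      obtain m where m: "Wf A N m = j" "m + 2 \<le> length (RR A N (Esj N j) n0)"
        using W_cover[OF assms(2) a1 t] by blast
      define d where "d = blocked_dist (Eg N) w1 (Esj N j) (N+1) 0"
      define L where "L = RR A N (Esj N j) n0"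
      have db: "1 \<le> d" "d \<le> real_of_int \<bar>j\<bar> + 1" unfolding d_def using dist_bounds[OF a1] by auto
      have cst: "real_of_rat (walk_cost w1 L) = real (length L - 1)"
        unfolding cost1 by (simp only: of_rat_of_nat_eq)
      have r2: "real (length L - 1) / d \<le> 9 - \<epsilon>" using r cst unfolding d_def L_def by simp
      have "real (length L - 1) \<le> (9 - \<epsilon>) * d" using r2 db(1) by (simp add: pos_divide_le_eq)
      also have "\<dots> \<le> (9 - \<epsilon>') * d" using db(1) e'(3) by (intro mult_right_mono) auto
      also have "\<dots> \<le> (9 - \<epsilon>') * (real_of_int \<bar>j\<bar> + 1)" using db(2) e'(2) by (intro mult_left_mono) auto
      finally have c: "real (length L - 1) \<le> (9 - \<epsilon>') * (real_of_int \<bar>j\<bar> + 1)" .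
      have "real m + 1 \<le> real (length L - 1)" using m(2) unfolding L_def by linarith
      then show "\<exists>n. Wf A N n = j \<and> real n + 1 \<le> (9 - \<epsilon>') * (real_of_int \<bar>j\<bar> + 1)"
        using m(1) c by (intro exI[of _ m]) auto
    qed
    then show False using cow[OF e'(1,2) N_def] by blast
  qed
  then obtain j where j: "1 \<le> \<bar>j\<bar>" "\<bar>j\<bar> \<le> int N" and
    jr: "\<forall>n. last (RR A N (Esj N j) n) = 0 \<longrightarrow>
      real_of_rat (walk_cost w1 (RR A N (Esj N j) n)) / blocked_dist (Eg N) w1 (Esj N j) (N+1) 0 > 9 - \<epsilon>"
    by blast
  show ?thesis
    apply (rule exI[of _ "Vg N"], rule exI[of _ "Eg N"], rule exI[of _ "N+1"], rule exI[of _ 0],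
           rule exI[of _ "Esj N j"], rule exI[of _ "2*N+1"])
    using outerplanar_G[of N] road[OF j] jr by blast
qed

end
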